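(* Let $G$ be a countable discrete group, $m$ a probability measure on $G$, and $(X,\mu)$ a standard probability space. If $a,b\in\mathrm{Stat}(G,m,X,\mu)$ are weakly equivalent ($a\sim b$), then their Furstenberg entropies coincide: $h_m(X,\mu,a)=h_m(X,\mu,b)$.
   Context: A measurable action $a$ of $G$ on $(X,\mu)$ is $m$-stationary if $\sum_{g\in G} m(g)\,\mu(g^aA)=\mu(A)$ for every measurable $A\subseteq X$, where $g^a$ denotes the (nonsingular) transformation by which $g$ acts in $a$. $\mathrm{Stat}(G,m,X,\mu)$ is the set of such actions. For $a,b\in\mathrm{Stat}(G,m,X,\mu)$, $a\preceq b$ means: for every $\epsilon>0$, finite $F\subseteq G$ and measurable $A_1,\ldots,A_n\subseteq X$ there are measurable $B_1,\ldots,B_n\subseteq X$ with $|\mu(g^aA_i\cap A_j)-\mu(g^bB_i\cap B_j)|<\epsilon$ for all $g\in F$, $i,j\le n$; and $a\sim b$ means $a\preceq b$ and $b\preceq a$. For $g\in G$ let $g^a\mu$ denote the measure $A\mapsto\mu(g^aA)$ (absolutely continuous w.r.t. $\mu$). The Furstenberg entropy is $h_m(X,\mu,a)=-\sum_{g\in G}m(g)\int_X\log\frac{d g^a\mu}{d\mu}(x)\,d\mu(x)\in[0,\infty]$. *)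

theory Defs
  imports "HOL-Probability.Probability"
begin

text \<open>
  The countable discrete group G is a type 'g of class group_add
  (a not necessarily commutative group, written additively: + is the group
  product, 0 the identity, uminus the inverse) and of class countable.
  A measurable action a assigns to g the measurable map a g : X -> X, with
  a 0 = id and a (g + h) = a g o a h; the transformation g^a is a g.
\<close>

definition standard_prob_space :: "'x::polish_space measure \<Rightarrow> bool" where
  "standard_prob_space M \<longleftrightarrow> sets M = sets (borel :: 'x measure) \<and> prob_space M"

text \<open>The measure g^a mu : A \<mapsto> mu(g^a A).  Since a g is a bijection with
  measurable inverse a (-g), we have g^a A = (a (-g))^{-1} A, so this is the
  push-forward of mu under a (-g).\<close>
definition act_measure :: "'x measure \<Rightarrow> ('g::group_add \<Rightarrow> 'x \<Rightarrow> 'x) \<Rightarrow> 'g \<Rightarrow> 'x measure" where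
  "act_measure M a g = distr M M (a (- g))"

definition nonsingular_action :: "'x measure \<Rightarrow> ('g::group_add \<Rightarrow> 'x \<Rightarrow> 'x) \<Rightarrow> bool" where
  "nonsingular_action M a \<longleftrightarrow>
     (\<forall>g. a g \<in> measurable M M) \<and>
     a 0 = id \<and>
     (\<forall>g h. a (g + h) = a g \<circ> a h) \<and>
     (\<forall>g. absolutely_continuous M (act_measure M a g))"

definition stationary_action :: "'g::{group_add,countable} pmf \<Rightarrow> 'x measure \<Rightarrow> ('g \<Rightarrow> 'x \<Rightarrow> 'x) \<Rightarrow> bool" where
  "stationary_action m M a \<longleftrightarrow> nonsingular_action M a \<and>
     (\<forall>A \<in> sets M. infsum (\<lambda>g. pmf m g * measure M (a g ` A)) UNIV = measure M A)"

definition weakly_contained :: "'x measure \<Rightarrow> ('g::group_add \<Rightarrow> 'x \<Rightarrow> 'x) \<Rightarrow> ('g \<Rightarrow> 'x \<Rightarrow> 'x) \<Rightarrow> bool" where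
  "weakly_contained M a b \<longleftrightarrow>
     (\<forall>\<epsilon>::real. \<epsilon> > 0 \<longrightarrow> (\<forall>F::'g set. finite F \<longrightarrow> (\<forall>As. set As \<subseteq> sets M \<longrightarrow>
        (\<exists>Bs. length Bs = length As \<and> set Bs \<subseteq> sets M \<and>
           (\<forall>g\<in>F. \<forall>i<length As. \<forall>j<length As.
              \<bar>measure M (a g ` (As ! i) \<inter> As ! j) - measure M (b g ` (Bs ! i) \<inter> Bs ! j)\<bar> < \<epsilon>)))))"

definition weakly_equivalent :: "'x measure \<Rightarrow> ('g::group_add \<Rightarrow> 'x \<Rightarrow> 'x) \<Rightarrow> ('g \<Rightarrow> 'x \<Rightarrow> 'x) \<Rightarrow> bool" where
  "weakly_equivalent M a b \<longleftrightarrow> weakly_contained M a b \<and> weakly_contained M b a"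

text \<open>Furstenberg entropy h_m(X,mu,a) = - sum_g m(g) \<integral> log (d g^a mu / d mu) d mu,
  a value in [0,\<infinity>].  The possibly non-integrable integrand is split into
  its negative and positive parts: the value is
  \<Sum>_g m(g) \<integral> (log f_g)^- d\<mu>  -  \<Sum>_g m(g) \<integral> (log f_g)^+ d\<mu>,
  computed in the extended reals (the second term is always finite since
  (log f)^+ \<le> f and \<integral> f d\<mu> \<le> 1).\<close>
definition furstenberg_entropy :: "'g::{group_add,countable} pmf \<Rightarrow> 'x measure \<Rightarrow> ('g \<Rightarrow> 'x \<Rightarrow> 'x) \<Rightarrow> ereal" where
  "furstenberg_entropy m M a =
     (let f = (\<lambda>g x. enn2real (RN_deriv M (act_measure M a g) x)) in
      enn2ereal (\<integral>\<^sup>+ g. (\<integral>\<^sup>+ x. ennreal (- ln (f g x)) \<partial>M) \<partial>measure_pmf m)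
      - enn2ereal (\<integral>\<^sup>+ g. (\<integral>\<^sup>+ x. ennreal (ln (f g x)) \<partial>M) \<partial>measure_pmf m))"

end

theory Submission
  imports Defs
begin


definition phi :: "real \<Rightarrow> real" where "phi y = y - 1 - ln y"
definition Tf :: "real \<Rightarrow> real \<Rightarrow> real" where "Tf p q = q - p - p * ln (q / p)"
definition Df :: "real \<Rightarrow> real \<Rightarrow> real" where "Df p q = - (p * ln (q / p))"

lemma phi_nonneg: "0 < y \<Longrightarrow> 0 \<le> phi y"
  unfolding phi_def using ln_le_minus_one[of y] by linarith

lemma Tf_nonneg: "0 \<le> p \<Longrightarrow> 0 \<le> q \<Longrightarrow> (p = 0 \<or> 0 < q) \<Longrightarrow> 0 \<le> Tf p q"
proof -
  assume h: "0 \<le> p" "0 \<le> q" "p = 0 \<or> 0 < q"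
  show ?thesis
  proof (cases "p = 0")
    case True then show ?thesis using h by (simp add: Tf_def)
  next
    case False
    then have "p > 0" "q > 0" using h by auto
    then have "ln (q/p) \<le> q/p - 1" by (intro ln_le_minus_one) auto
    then have "p * ln (q/p) \<le> p * (q/p - 1)" using \<open>p>0\<close> by (intro mult_left_mono) auto
    also have "\<dots> = q - p" using \<open>p>0\<close> by (simp add: field_simps)
    finally show ?thesis by (simp add: Tf_def)
  qed
qed

lemma Tf_Df: "Tf p q = q - p + Df p q" by (simp add: Tf_def Df_def)

definition dpart :: "'x measure \<Rightarrow> 'x set list \<Rightarrow> bool" where
  "dpart M As \<longleftrightarrow> set As \<subseteq> sets M \<and> (\<forall>i<length As. \<forall>j<length As. i \<noteq> j \<longrightarrow> As!i \<inter> As!j = {})"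
definition cpart :: "'x measure \<Rightarrow> 'x set list \<Rightarrow> bool" where
  "cpart M As \<longleftrightarrow> dpart M As \<and> \<Union>(set As) = space M"

lemma dpart_disj: "dpart M As \<Longrightarrow> disjoint_family_on (\<lambda>i. As!i) {..<length As}"
  unfolding dpart_def disjoint_family_on_def by auto

lemma dpart_sets: "dpart M As \<Longrightarrow> i < length As \<Longrightarrow> As!i \<in> sets M"
  unfolding dpart_def by auto

lemma union_idx: "\<Union>(set As) = (\<Union>i\<in>{..<length As}. As!i)"
  by (auto simp: in_set_conv_nth) (metis nth_mem)

lemma ennreal_integral_le:
  fixes g :: "'a \<Rightarrow> real"
  assumes "integrable M g"
  shows "ennreal (integral\<^sup>L M g) \<le> (\<integral>\<^sup>+x. ennreal (g x) \<partial>M)"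
proof -
  have "integral\<^sup>L M g \<le> integral\<^sup>L M (\<lambda>x. max (g x) 0)"
    using assms by (intro integral_mono) auto
  moreover have "(\<integral>\<^sup>+x. ennreal (max (g x) 0) \<partial>M) = ennreal (integral\<^sup>L M (\<lambda>x. max (g x) 0))"
    using assms by (intro nn_integral_eq_integral) auto
  moreover have "(\<lambda>x. ennreal (max (g x) 0)) = (\<lambda>x. ennreal (g x))"
    by (auto simp: max_def ennreal_neg)
  ultimately show ?thesis by (metis ennreal_leI)
qed

lemma sum_meas_cpart:
  assumes "cpart M As" "prob_space L" "sets L = sets M"
  shows "(\<Sum>i<length As. measure L (As!i)) = 1"
proof -
  interpret L: prob_space L by fact
  have d: "dpart M As" using assms unfolding cpart_def by auto
  have "(\<Sum>i<length As. measure L (As!i)) = measure L (\<Union>i\<in>{..<length As}. As!i)"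
    using d dpart_sets[OF d] assms(3)
    by (intro measure_finite_Union[symmetric] dpart_disj) (auto simp: L.emeasure_eq_measure)
  also have "(\<Union>i\<in>{..<length As}. As!i) = space L"
    using assms sets_eq_imp_space_eq[OF assms(3)] unfolding cpart_def union_idx by auto
  finally show ?thesis by (simp add: L.prob_space)
qed

locale kl = M: prob_space M for M :: "'x measure" +
  fixes N :: "'x measure"
  assumes N_prob: "prob_space N" and sets_N: "sets N = sets M"
    and acMN: "absolutely_continuous M N" and acNM: "absolutely_continuous N M"
begin

definition f where "f x = enn2real (RN_deriv M N x)"
definition K where "K = (\<integral>\<^sup>+ x. ennreal (phi (f x)) \<partial>M)"

interpretation N: prob_space N by (rule N_prob)

lemma space_N[simp]: "space N = space M" using sets_eq_imp_space_eq[OF sets_N] .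

lemma f_meas[measurable]: "f \<in> borel_measurable M" unfolding f_def by measurable
lemma f_nonneg: "0 \<le> f x" unfolding f_def by simp

lemma int_N: "integrable N h \<longleftrightarrow> integrable M (\<lambda>x. f x * h x)" if "h \<in> borel_measurable M"
  unfolding f_def using M.RN_deriv_integrable[OF _ acMN sets_N that] N.sigma_finite_measure by simp

lemma integral_N: "integral\<^sup>L N h = (\<integral>x. f x * h x \<partial>M)" if "h \<in> borel_measurable M"
  unfolding f_def using M.RN_deriv_integral[OF _ acMN sets_N that] N.sigma_finite_measure by simp

lemma f_int: "integrable M f"
  using int_N[of "\<lambda>_. 1"] by simp

lemma f_int_ind: "integrable M (\<lambda>x. f x * indicator A x)" if "A \<in> sets M"
proof -
  have "integrable N (indicator A :: _ \<Rightarrow> real)" using that sets_N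
    by (auto intro!: integrable_indicator simp: N.emeasure_eq_measure)
  then show ?thesis using int_N[of "indicator A"] that by simp
qed

lemma qA: "measure N A = (\<integral>x. f x * indicator A x \<partial>M)" if "A \<in> sets M"
proof -
  have "measure N A = integral\<^sup>L N (indicator A)" using that sets_N sets.sets_into_space[OF that]
    by (simp add: Int_absorb2)
  also have "\<dots> = (\<integral>x. f x * indicator A x \<partial>M)" using integral_N[of "indicator A"] that by simp
  finally show ?thesis .
qed

lemma q_null: "A \<in> sets M \<Longrightarrow> measure M A = 0 \<Longrightarrow> measure N A = 0"
proof -
  assume A: "A \<in> sets M" "measure M A = 0"
  then have "A \<in> null_sets M" by (simp add: M.emeasure_eq_measure null_sets_def)
  then have "A \<in> null_sets N" using acMN unfolding absolutely_continuous_def by blast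
  then show ?thesis by (simp add: measure_def null_setsD1)
qed

lemma p_null: "A \<in> sets M \<Longrightarrow> measure N A = 0 \<Longrightarrow> measure M A = 0"
proof -
  assume A: "A \<in> sets M" "measure N A = 0"
  then have "A \<in> null_sets N" using sets_N by (simp add: N.emeasure_eq_measure null_sets_def)
  then have "A \<in> null_sets M" using acNM unfolding absolutely_continuous_def by blast
  then show ?thesis by (simp add: measure_def null_setsD1)
qed

lemma f_pos: "AE x in M. 0 < f x"
proof -
  let ?Z = "{x\<in>space M. f x = 0}"
  have Z: "?Z \<in> sets M" by measurable
  have "measure N ?Z = (\<integral>x. f x * indicator ?Z x \<partial>M)" using qA[OF Z] .
  also have "\<dots> = 0" by (intro integral_eq_zero_AE) (auto split: split_indicator)
  finally have "measure M ?Z = 0" using p_null[OF Z] by simp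
  then have "?Z \<in> null_sets M" using Z by (simp add: M.emeasure_eq_measure null_sets_def)
  then have "AE x in M. x \<notin> ?Z" by (rule AE_not_in)
  with AE_space show ?thesis by eventually_elim (use f_nonneg in \<open>auto simp: less_le\<close>)
qed


lemma p_nonneg: "0 \<le> measure M A" by simp

lemma T_le:
  assumes A: "A \<in> sets M"
  shows "ennreal (Tf (measure M A) (measure N A)) \<le> (\<integral>\<^sup>+x. ennreal (phi (f x)) * indicator A x \<partial>M)"
proof (cases "measure M A = 0")
  case True
  then have "measure N A = 0" using q_null A by simp
  with True show ?thesis by (simp add: Tf_def)
next
  case False
  define p where "p = measure M A"
  define q where "q = measure N A"
  have p: "p > 0" using False by (simp add: p_def less_le)
  have "q \<noteq> 0" using p_null[OF A] False by (auto simp: q_def)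
  then have q: "q > 0" using measure_nonneg[of N A] by (simp add: q_def less_le)
  define t where "t = q / p"
  have t: "t > 0" using p q by (simp add: t_def)
  define c where "c = phi t - (1 - 1/t) * t"
  define g where "g x = c * indicator A x + (1 - 1/t) * (f x * indicator A x)" for x
  have gi: "integrable M g" unfolding g_def using A f_int_ind[OF A]
    by (intro Bochner_Integration.integrable_add integrable_mult_right) (auto intro!: integrable_indicator simp: M.emeasure_eq_measure)
  have "integral\<^sup>L M g = c * p + (1 - 1/t) * q"
    unfolding g_def using A f_int_ind[OF A] qA[OF A]
    by (subst Bochner_Integration.integral_add) (auto intro!: integrable_indicator simp: M.emeasure_eq_measure p_def q_def
        sets.sets_into_space Int_absorb2)
  also have "\<dots> = Tf p q"
    unfolding c_def phi_def Tf_def t_def using p q by (simp add: field_simps)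
  finally have ig: "integral\<^sup>L M g = Tf p q" .
  have pw: "ennreal (g x) \<le> ennreal (phi (f x)) * indicator A x" if fx: "0 < f x" for x
  proof (cases "x \<in> A")
    case True
    have "ln (f x / t) \<le> f x / t - 1" using fx t by (intro ln_le_minus_one) auto
    moreover have "ln (f x / t) = ln (f x) - ln t" using fx t by (simp add: ln_div)
    ultimately have "g x \<le> phi (f x)" using True t unfolding g_def c_def phi_def
      by (simp add: field_simps)
    then show ?thesis using True by (simp add: ennreal_leI)
  next
    case False
    then show ?thesis by (simp add: g_def)
  qed
  have "ennreal (Tf p q) \<le> (\<integral>\<^sup>+x. ennreal (g x) \<partial>M)"
    using ennreal_integral_le[OF gi] ig by simp
  also have "\<dots> \<le> (\<integral>\<^sup>+x. ennreal (phi (f x)) * indicator A x \<partial>M)"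
    using f_pos by (intro nn_integral_mono_AE) (auto elim!: eventually_mono intro: pw)
  finally show ?thesis by (simp add: p_def q_def)
qed

lemma T_nonneg: "A \<in> sets M \<Longrightarrow> 0 \<le> Tf (measure M A) (measure N A)"
  using p_null[of A] by (intro Tf_nonneg) (auto simp: less_le)

lemma sum_T_le:
  assumes "dpart M As"
  shows "ennreal (\<Sum>i<length As. Tf (measure M (As!i)) (measure N (As!i))) \<le> K"
proof -
  have "ennreal (\<Sum>i<length As. Tf (measure M (As!i)) (measure N (As!i)))
      = (\<Sum>i<length As. ennreal (Tf (measure M (As!i)) (measure N (As!i))))"
    using T_nonneg dpart_sets[OF assms] by (subst sum_ennreal) auto
  also have "\<dots> \<le> (\<Sum>i<length As. \<integral>\<^sup>+x. ennreal (phi (f x)) * indicator (As!i) x \<partial>M)"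
    using T_le dpart_sets[OF assms] by (intro sum_mono) auto
  also have "\<dots> = (\<integral>\<^sup>+x. (\<Sum>i<length As. ennreal (phi (f x)) * indicator (As!i) x) \<partial>M)"
  proof (intro nn_integral_sum[symmetric])
    fix i assume "i \<in> {..<length As}"
    then have [measurable]: "As!i \<in> sets M" using dpart_sets[OF assms] by auto
    show "(\<lambda>x. ennreal (phi (f x)) * indicator (As!i) x) \<in> borel_measurable M"
      unfolding phi_def by measurable
  qed
  also have "\<dots> = (\<integral>\<^sup>+x. ennreal (phi (f x)) * indicator (\<Union>i\<in>{..<length As}. As!i) x \<partial>M)"
    by (simp add: sum_distrib_left[symmetric] indicator_UN_disjoint[OF _ dpart_disj[OF assms]])
  also have "\<dots> \<le> K" unfolding K_def
    by (intro nn_integral_mono) (auto split: split_indicator)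
  finally show ?thesis .
qed

lemma sum_D_le:
  assumes "cpart M As"
  shows "ennreal (\<Sum>i<length As. Df (measure M (As!i)) (measure N (As!i))) \<le> K"
proof -
  have "(\<Sum>i<length As. Tf (measure M (As!i)) (measure N (As!i)))
     = (\<Sum>i<length As. measure N (As!i)) - (\<Sum>i<length As. measure M (As!i))
       + (\<Sum>i<length As. Df (measure M (As!i)) (measure N (As!i)))"
    by (simp add: Tf_Df sum.distrib sum_subtractf)
  also have "\<dots> = (\<Sum>i<length As. Df (measure M (As!i)) (measure N (As!i)))"
    using sum_meas_cpart[OF assms N_prob sets_N] sum_meas_cpart[OF assms M.prob_space_axioms refl] by simp
  finally show ?thesis using sum_T_le[of As] assms unfolding cpart_def by simp
qed

lemma sum_T_eq_D:
  assumes "cpart M As"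
  shows "(\<Sum>i<length As. Tf (measure M (As!i)) (measure N (As!i)))
       = (\<Sum>i<length As. Df (measure M (As!i)) (measure N (As!i)))"
proof -
  have "(\<Sum>i<length As. Tf (measure M (As!i)) (measure N (As!i)))
     = (\<Sum>i<length As. measure N (As!i)) - (\<Sum>i<length As. measure M (As!i))
       + (\<Sum>i<length As. Df (measure M (As!i)) (measure N (As!i)))"
    by (simp add: Tf_Df sum.distrib sum_subtractf)
  also have "\<dots> = (\<Sum>i<length As. Df (measure M (As!i)) (measure N (As!i)))"
    using sum_meas_cpart[OF assms N_prob sets_N] sum_meas_cpart[OF assms M.prob_space_axioms refl] by simp
  finally show ?thesis .
qed

lemma level:
  assumes A: "A \<in> sets M" and d: "0 < d"
    and lev: "\<And>x. x \<in> A \<Longrightarrow> 0 < f x \<and> s \<le> ln (f x) \<and> ln (f x) < s + d"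
  shows "(\<integral>\<^sup>+x. ennreal (phi (f x)) * indicator A x \<partial>M)
       \<le> ennreal (Tf (measure M A) (measure N A) + d * measure M A)"
proof -
  define p where "p = measure M A"
  define q where "q = measure N A"
  have ii: "integrable M (\<lambda>x. (f x - 1 - s) * indicator A x)"
    using f_int_ind[OF A] A
    by (simp add: left_diff_distrib) (auto intro!: Bochner_Integration.integrable_diff integrable_indicator simp: M.emeasure_eq_measure)
  have "(\<integral>\<^sup>+x. ennreal (phi (f x)) * indicator A x \<partial>M) \<le> (\<integral>\<^sup>+x. ennreal ((f x - 1 - s) * indicator A x) \<partial>M)"
  proof (intro nn_integral_mono)
    fix x show "ennreal (phi (f x)) * indicator A x \<le> ennreal ((f x - 1 - s) * indicator A x)"
      using lev[of x] by (auto simp: phi_def split: split_indicator intro!: ennreal_leI)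
  qed
  also have "\<dots> = ennreal (\<integral>x. (f x - 1 - s) * indicator A x \<partial>M)"
  proof (intro nn_integral_eq_integral ii AE_I2)
    fix x show "0 \<le> (f x - 1 - s) * indicator A x"
    proof (cases "x \<in> A")
      case True
      then have "ln (f x) \<le> f x - 1" using lev[of x] by (intro ln_le_minus_one) auto
      then show ?thesis using True lev[of x] by simp
    qed simp
  qed
  also have "(\<integral>x. (f x - 1 - s) * indicator A x \<partial>M) = q - (1 + s) * p"
    using f_int_ind[OF A] A qA[OF A]
    by (simp add: left_diff_distrib p_def q_def sets.sets_into_space Int_absorb2)
       (subst Bochner_Integration.integral_diff; auto intro!: integrable_indicator simp: M.emeasure_eq_measure algebra_simps)
  also have "q - (1 + s) * p \<le> Tf p q + d * p"
  proof (cases "p = 0")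
    case True
    then have "q = 0" using q_null A by (simp add: p_def q_def)
    with True show ?thesis by (simp add: Tf_def)
  next
    case False
    have p: "p > 0" using False by (simp add: p_def less_le)
    have "q \<noteq> 0" using p_null[OF A] False by (auto simp: p_def q_def)
    then have q: "q > 0" using measure_nonneg[of N A] by (simp add: q_def less_le)
    have "q \<le> (\<integral>x. exp (s + d) * indicator A x \<partial>M)"
      unfolding qA[OF A] q_def
    proof (intro integral_mono f_int_ind[OF A])
      show "integrable M (\<lambda>x. exp (s + d) * indicator A x)" using A
        by (auto intro!: integrable_indicator simp: M.emeasure_eq_measure)
      fix x show "f x * indicator A x \<le> exp (s + d) * indicator A x"
      proof (cases "x \<in> A")
        case True
        then have "f x < exp (s + d)" using lev[of x] by (metis exp_ln exp_less_mono)
        then show ?thesis using True by simp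
      qed simp
    qed
    also have "\<dots> = exp (s + d) * p" using A by (simp add: p_def sets.sets_into_space Int_absorb2)
    finally have "q / p \<le> exp (s + d)" using p by (simp add: field_simps)
    then have "ln (q / p) \<le> s + d" using p q by (metis exp_gt_zero ln_exp ln_le_cancel_iff divide_pos_pos)
    then have "p * ln (q / p) \<le> p * (s + d)" using p by (intro mult_left_mono) auto
    then show ?thesis unfolding Tf_def by (simp add: algebra_simps)
  qed
  finally show ?thesis by (simp add: p_def q_def ennreal_leI)
qed

lemma approx:
  assumes cK: "ennreal c < K" and c0: "0 \<le> c"
  shows "\<exists>As. cpart M As \<and> c < (\<Sum>i<length As. Df (measure M (As!i)) (measure N (As!i)))"
proof -
  obtain d where d: "0 < d" "ennreal (c + 2 * d) < K"
  proof (cases "K = \<top>")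
    case True then show ?thesis using that[of 1] by simp
  next
    case False
    then obtain k where k: "K = ennreal k" "0 \<le> k" by (cases K) auto
    then have "c < k" using cK c0 by (simp add: ennreal_less_iff)
    show ?thesis
    proof (rule that[of "(k - c) / 3"])
      show "0 < (k - c) / 3" using \<open>c < k\<close> by simp
      show "ennreal (c + 2 * ((k - c) / 3)) < K" unfolding k(1) using \<open>c < k\<close> c0
        by (subst ennreal_less_iff) (auto simp: field_simps)
    qed
  qed
  define fl where "fl x = \<lfloor>ln (f x) / d\<rfloor>" for x
  define U where "U n = {x\<in>space M. 0 < f x \<and> - int n \<le> fl x \<and> fl x < int n}" for n :: nat
  define A where "A n i = {x\<in>space M. 0 < f x \<and> fl x = int i - int n}" for n i :: nat
  have U_meas[measurable]: "U n \<in> sets M" for n unfolding U_def fl_def by measurable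
  have A_meas[measurable]: "A n i \<in> sets M" for n i unfolding A_def fl_def by measurable
  have U_A: "U n = (\<Union>i\<in>{..<2*n}. A n i)" for n
  proof (intro set_eqI iffI)
    fix x assume "x \<in> U n"
    then have "x \<in> A n (nat (fl x + int n))" "nat (fl x + int n) < 2 * n"
      by (auto simp: U_def A_def)
    then show "x \<in> (\<Union>i\<in>{..<2*n}. A n i)" by auto
  qed (auto simp: U_def A_def)
  have A_disj: "disjoint_family_on (A n) {..<2*n}" for n
    unfolding disjoint_family_on_def A_def by auto
  have inc: "incseq (\<lambda>n x. ennreal (phi (f x)) * indicator (U n) x)"
  proof (intro incseq_SucI le_funI)
    fix n x show "ennreal (phi (f x)) * indicator (U n) x \<le> ennreal (phi (f x)) * indicator (U (Suc n)) x"
      by (auto simp: U_def split: split_indicator)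
  qed
  have sup: "(SUP n. ennreal (phi (f x)) * indicator (U n) x) = ennreal (phi (f x))"
    if x: "x \<in> space M" "0 < f x" for x
  proof -
    define n where "n = nat (\<bar>fl x\<bar> + 1)"
    have "x \<in> U n" using x by (auto simp: U_def n_def)
    then have "ennreal (phi (f x)) \<le> (SUP n. ennreal (phi (f x)) * indicator (U n) x)"
      by (intro SUP_upper2[of n]) auto
    moreover have "(SUP n. ennreal (phi (f x)) * indicator (U n) x) \<le> ennreal (phi (f x))"
      by (intro SUP_least) (auto split: split_indicator)
    ultimately show ?thesis by (rule antisym[rotated])
  qed
  have "K = (\<integral>\<^sup>+x. (SUP n. ennreal (phi (f x)) * indicator (U n) x) \<partial>M)"
    unfolding K_def
  proof (intro nn_integral_cong_AE)
    show "AE x in M. ennreal (phi (f x)) = (SUP n. ennreal (phi (f x)) * indicator (U n) x)"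
      using f_pos AE_space by eventually_elim (simp add: sup)
  qed
  also have "\<dots> = (SUP n. \<integral>\<^sup>+x. ennreal (phi (f x)) * indicator (U n) x \<partial>M)"
    using inc by (intro nn_integral_monotone_convergence_SUP) (auto simp: phi_def)
  finally have K_SUP: "K = (SUP n. \<integral>\<^sup>+x. ennreal (phi (f x)) * indicator (U n) x \<partial>M)" .
  have "ennreal (c + d) \<le> ennreal (c + 2 * d)" using d by (intro ennreal_leI) auto
  from order.strict_trans1[OF this d(2)]
  have "ennreal (c + d) < (SUP n. \<integral>\<^sup>+x. ennreal (phi (f x)) * indicator (U n) x \<partial>M)"
    using K_SUP by simp
  then obtain n where n: "ennreal (c + d) < (\<integral>\<^sup>+x. ennreal (phi (f x)) * indicator (U n) x \<partial>M)"
    by (auto simp: less_SUP_iff)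
  define T where "T i = Tf (measure M (A n i)) (measure N (A n i))" for i
  have lvl: "(\<integral>\<^sup>+x. ennreal (phi (f x)) * indicator (A n i) x \<partial>M) \<le> ennreal (T i + d * measure M (A n i))" for i
    unfolding T_def
  proof (intro level[OF A_meas d(1)])
    fix x assume x: "x \<in> A n i"
    let ?k = "real_of_int (int i - int n)"
    have fx: "0 < f x" and "fl x = int i - int n" using x by (auto simp: A_def)
    then have "?k \<le> ln (f x) / d" "ln (f x) / d < ?k + 1" unfolding fl_def by linarith+
    then have "?k * d \<le> ln (f x)" "ln (f x) < (?k + 1) * d" using d by (auto simp: field_simps)
    then show "0 < f x \<and> ?k * d \<le> ln (f x) \<and> ln (f x) < ?k * d + d" using fx by (simp add: algebra_simps)
  qed
  have "(\<integral>\<^sup>+x. ennreal (phi (f x)) * indicator (U n) x \<partial>M)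
      = (\<integral>\<^sup>+x. (\<Sum>i<2*n. ennreal (phi (f x)) * indicator (A n i) x) \<partial>M)"
    unfolding U_A by (simp add: sum_distrib_left[symmetric] indicator_UN_disjoint[OF _ A_disj])
  also have "\<dots> = (\<Sum>i<2*n. \<integral>\<^sup>+x. ennreal (phi (f x)) * indicator (A n i) x \<partial>M)"
    by (intro nn_integral_sum) (auto simp: phi_def)
  also have "\<dots> \<le> (\<Sum>i<2*n. ennreal (T i + d * measure M (A n i)))"
    by (intro sum_mono lvl)
  also have "\<dots> = ennreal (\<Sum>i<2*n. T i + d * measure M (A n i))"
    using T_nonneg d unfolding T_def by (intro sum_ennreal) auto
  also have "(\<Sum>i<2*n. T i + d * measure M (A n i)) = (\<Sum>i<2*n. T i) + d * measure M (U n)"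
  proof -
    have "measure M (U n) = (\<Sum>i<2*n. measure M (A n i))"
      unfolding U_A by (intro measure_finite_Union A_disj) (auto simp: M.emeasure_eq_measure)
    then show ?thesis by (simp add: sum.distrib sum_distrib_left)
  qed
  also have "\<dots> \<le> (\<Sum>i<2*n. T i) + d"
    using d by (simp add: mult_left_le)
  finally have "(\<integral>\<^sup>+x. ennreal (phi (f x)) * indicator (U n) x \<partial>M) \<le> ennreal ((\<Sum>i<2*n. T i) + d)"
    by (simp add: ennreal_leI)
  from order.strict_trans2[OF n this] have "c + d < (\<Sum>i<2*n. T i) + d"
    using c0 d by (subst (asm) ennreal_less_iff) auto
  then have "c < (\<Sum>i<2*n. T i)" by simp
  define As where "As = map (A n) [0..<2*n] @ [space M - U n]"
  have len: "length As = Suc (2 * n)" by (simp add: As_def)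
  have nthA: "i < 2*n \<Longrightarrow> As ! i = A n i" for i by (simp add: As_def nth_append)
  have nthL: "As ! (2*n) = space M - U n" by (simp add: As_def nth_append)
  have cp: "cpart M As"
    unfolding cpart_def dpart_def
  proof (intro conjI allI impI)
    show "set As \<subseteq> sets M" by (auto simp: As_def)
    fix i j assume ij: "i < length As" "j < length As" "i \<noteq> j"
    show "As!i \<inter> As!j = {}"
    proof (cases "i < 2*n")
      case True
      show ?thesis
      proof (cases "j < 2*n")
        case True
        then show ?thesis using \<open>i < 2*n\<close> ij by (simp add: nthA A_def) (auto)
      next
        case False
        then have "j = 2*n" using ij len by auto
        then show ?thesis using \<open>i < 2*n\<close> by (auto simp: nthA nthL U_A)
      qed
    next
      case False
      then have "i = 2*n" using ij len by auto
      then have "j < 2*n" using ij len by auto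
      then show ?thesis using \<open>i = 2*n\<close> by (auto simp: nthA nthL U_A)
    qed
  next
    show "\<Union>(set As) = space M" using sets.sets_into_space[OF A_meas] U_A[of n] by (auto simp: As_def)
  qed
  have "(\<Sum>i<length As. Tf (measure M (As!i)) (measure N (As!i)))
      = (\<Sum>i<2*n. T i) + Tf (measure M (As!(2*n))) (measure N (As!(2*n)))"
    unfolding len by (simp add: nthA T_def)
  also have "\<dots> \<ge> (\<Sum>i<2*n. T i)" using T_nonneg[of "As!(2*n)"] by (simp add: nthL)
  finally have "c < (\<Sum>i<length As. Tf (measure M (As!i)) (measure N (As!i)))"
    using \<open>c < (\<Sum>i<2*n. T i)\<close> by linarith
  then show ?thesis using cp sum_T_eq_D[OF cp] by auto
qed

end


lemma xlnx_lower: "0 < x \<Longrightarrow> - 2 * sqrt x \<le> x * ln x"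
proof -
  assume x: "0 < x"
  have sx: "0 < sqrt x" using x by simp
  have "ln (1 / sqrt x) \<le> 1 / sqrt x - 1" using sx by (intro ln_le_minus_one) auto
  then have "- ln (sqrt x) \<le> 1 / sqrt x - 1" using sx by (simp add: ln_div)
  moreover have "ln (sqrt x) = ln x / 2" using x by (simp add: ln_sqrt)
  ultimately have "ln x \<ge> 2 - 2 / sqrt x" by simp
  then have "x * ln x \<ge> x * (2 - 2 / sqrt x)" using x by (intro mult_left_mono) auto
  moreover have "x * (2 - 2 / sqrt x) = 2 * x - 2 * sqrt x"
    using sx by (simp add: field_simps)
  ultimately show ?thesis using x by linarith
qed

lemma Df_tangent:
  assumes "0 < p'" "0 < s" "0 < p" "0 < q"
  shows "p' * ln (p / q) + p' - p * s / q \<le> Df p' s"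
proof -
  define y where "y = s * p / (p' * q)"
  have y: "0 < y" using assms by (simp add: y_def)
  have "ln y \<le> y - 1" using y by (rule ln_le_minus_one)
  then have "p' * ln y \<le> p' * (y - 1)" using assms by (intro mult_left_mono) auto
  moreover have "ln y = ln (s / p') + ln (p / q)"
    using assms by (simp add: y_def ln_div ln_mult)
  moreover have "p' * (y - 1) = p * s / q - p'" using assms by (simp add: y_def field_simps)
  ultimately show ?thesis unfolding Df_def by (simp add: algebra_simps)
qed

lemma Df_mono:
  assumes "0 < p'" "0 < q'" "q' \<le> s"
  shows "Df p' s \<le> Df p' q'"
proof -
  have "q' / p' \<le> s / p'" using assms by (intro divide_right_mono) auto
  then have "ln (q' / p') \<le> ln (s / p')" using assms by simp
  then show ?thesis unfolding Df_def using assms by (simp add: mult_left_mono)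
qed

lemma Df_lower:
  assumes p: "0 \<le> p" and q: "0 \<le> q" and pq: "p > 0 \<Longrightarrow> q > 0" and e: "0 < e"
  shows "\<exists>d>0. \<forall>p' q'. \<bar>p' - p\<bar> \<le> d \<longrightarrow> 0 \<le> p' \<longrightarrow> 0 \<le> q' \<longrightarrow> q' \<le> 1 \<longrightarrow> q' \<le> q + d
     \<longrightarrow> (q' = 0 \<longrightarrow> p' = 0) \<longrightarrow> Df p q - e \<le> Df p' q'"
proof (cases "p = 0")
  case True
  show ?thesis
  proof (intro exI[of _ "(e/2)^2"] conjI allI impI)
    show "0 < (e/2)^2" using e by simp
    fix p' q' assume h: "\<bar>p' - p\<bar> \<le> (e/2)^2" "0 \<le> p'" "0 \<le> q'" "q' \<le> 1" "q' \<le> q + (e/2)^2" "q' = 0 \<longrightarrow> p' = 0"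
    show "Df p q - e \<le> Df p' q'"
    proof (cases "p' = 0")
      case True then show ?thesis using \<open>p = 0\<close> e by (simp add: Df_def)
    next
      case False
      then have p': "0 < p'" using h by simp
      then have q': "0 < q'" using h by (cases "q' = 0") auto
      have "Df p' 1 \<le> Df p' q'" using Df_mono[OF p' q' h(4)] .
      moreover have "Df p' 1 = p' * ln p'" using p' by (simp add: Df_def ln_div)
      moreover have "sqrt p' \<le> e / 2"
        using h(1) True e by (metis abs_of_nonneg diff_zero h(2) less_imp_le real_le_lsqrt real_sqrt_le_iff
              half_gt_zero zero_le_power2 real_sqrt_le_mono power2_eq_square)
      ultimately show ?thesis using xlnx_lower[OF p'] True by (simp add: Df_def)
    qed
  qed
next
  case False
  then have p0: "0 < p" using p by simp
  then have q0: "0 < q" using pq by simp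
  define C where "C = \<bar>ln (p / q)\<bar> + 1 + p / q"
  have C: "0 < C" using p0 q0 by (simp add: C_def add_pos_nonneg)
  define d where "d = min (p / 2) (e / C)"
  have d: "0 < d" using p0 e C by (simp add: d_def)
  show ?thesis
  proof (intro exI[of _ d] conjI allI impI d)
    fix p' q' assume h: "\<bar>p' - p\<bar> \<le> d" "0 \<le> p'" "0 \<le> q'" "q' \<le> 1" "q' \<le> q + d" "q' = 0 \<longrightarrow> p' = 0"
    have "\<bar>p' - p\<bar> \<le> p / 2" using h(1) by (simp add: d_def)
    then have p': "0 < p'" using p0 by linarith
    then have q': "0 < q'" using h by (cases "q' = 0") auto
    have s: "0 < q + d" using q0 d by simp
    have "Df p' (q + d) \<le> Df p' q'" using Df_mono[OF p' q' h(5)] .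
    moreover have "p' * ln (p / q) + p' - p * (q + d) / q \<le> Df p' (q + d)"
      using Df_tangent[OF p' s p0 q0] .
    moreover have "p' * ln (p / q) + p' - p * (q + d) / q
        = Df p q + (p' - p) * (ln (p / q) + 1) - d * (p / q)"
      using q0 by (simp add: Df_def field_simps ln_div)
    moreover have "(p' - p) * (ln (p / q) + 1) \<ge> - (d * (\<bar>ln (p / q)\<bar> + 1))"
    proof -
      have "\<bar>(p' - p) * (ln (p / q) + 1)\<bar> \<le> d * (\<bar>ln (p / q)\<bar> + 1)"
        unfolding abs_mult using h(1) by (intro mult_mono) (auto simp: abs_le_iff)
      then show ?thesis by (simp add: abs_le_iff)
    qed
    moreover have "d * C \<le> e"
    proof -
      have "d \<le> e / C" by (simp add: d_def)
      then have "d * C \<le> e / C * C" using C by (intro mult_right_mono) auto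
      then show ?thesis using C by simp
    qed
    ultimately show "Df p q - e \<le> Df p' q'" unfolding C_def by (simp add: algebra_simps)
  qed
qed



locale act = M: prob_space M for M :: "'x measure" +
  fixes a :: "'g::group_add \<Rightarrow> 'x \<Rightarrow> 'x"
  assumes ns: "nonsingular_action M a" and sp: "space M = UNIV"
begin

lemma a_meas: "a g \<in> measurable M M" using ns unfolding nonsingular_action_def by auto
lemma a_zero: "a 0 = id" using ns unfolding nonsingular_action_def by auto
lemma a_add: "a (g + h) = a g \<circ> a h" using ns unfolding nonsingular_action_def by auto
lemma a_ac: "absolutely_continuous M (act_measure M a g)" using ns unfolding nonsingular_action_def by auto

lemma a_inv: "a g (a (- g) x) = x" "a (- g) (a g x) = x"
  using a_add[of g "-g"] a_add[of "-g" g] a_zero by (auto dest!: fun_cong[where x=x])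

lemma img_eq: "a g ` A = a (- g) -` A"
proof (intro set_eqI iffI)
  fix x assume "x \<in> a g ` A" then show "x \<in> a (- g) -` A" using a_inv by auto
next
  fix x assume "x \<in> a (- g) -` A"
  then have "a g (a (- g) x) \<in> a g ` A" by auto
  then show "x \<in> a g ` A" using a_inv by simp
qed

lemma img_sets: "A \<in> sets M \<Longrightarrow> a g ` A \<in> sets M"
  unfolding img_eq using measurable_sets[OF a_meas[of "-g"]] sp by auto

lemma img_img: "a (- g) ` (a g ` A) = A"
  using a_inv by (auto simp: image_image)

lemma act_sets: "sets (act_measure M a g) = sets M" by (simp add: act_measure_def)

lemma act_measure_eq: "A \<in> sets M \<Longrightarrow> measure (act_measure M a g) A = measure M (a g ` A)"
  unfolding act_measure_def using a_meas[of "-g"] sp by (simp add: measure_distr img_eq)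

lemma act_emeasure_eq: "A \<in> sets M \<Longrightarrow> emeasure (act_measure M a g) A = emeasure M (a g ` A)"
  unfolding act_measure_def using a_meas[of "-g"] sp by (simp add: emeasure_distr img_eq)

lemma act_prob: "prob_space (act_measure M a g)"
  unfolding act_measure_def using a_meas by (intro M.prob_space_distr) auto

lemma img_null: "A \<in> sets M \<Longrightarrow> measure M (a g ` A) = 0 \<Longrightarrow> measure M A = 0"
proof -
  assume A: "A \<in> sets M" "measure M (a g ` A) = 0"
  have B: "a g ` A \<in> sets M" using img_sets[OF A(1)] .
  then have "a g ` A \<in> null_sets M" using A by (simp add: M.emeasure_eq_measure null_sets_def)
  then have "a g ` A \<in> null_sets (act_measure M a (-g))" using a_ac[of "-g"] unfolding absolutely_continuous_def by blast
  then have "emeasure (act_measure M a (-g)) (a g ` A) = 0" by auto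
  then have "emeasure M A = 0" using act_emeasure_eq[OF B, of "-g"] by (simp add: img_img)
  then show ?thesis by (simp add: measure_def)
qed

lemma kl: "kl M (act_measure M a g)"
proof (intro kl.intro kl_axioms.intro)
  show "prob_space M" by (rule M.prob_space_axioms)
  show "prob_space (act_measure M a g)" by (rule act_prob)
  show "sets (act_measure M a g) = sets M" by (rule act_sets)
  show "absolutely_continuous M (act_measure M a g)" by (rule a_ac)
  show "absolutely_continuous (act_measure M a g) M"
    unfolding absolutely_continuous_def
  proof
    fix A assume "A \<in> null_sets (act_measure M a g)"
    then have A: "A \<in> sets M" "emeasure (act_measure M a g) A = 0" by (auto simp: act_sets)
    then have "measure M (a g ` A) = 0" using act_emeasure_eq[OF A(1)] by (simp add: measure_def)
    then have "measure M A = 0" using img_null A by auto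
    then show "A \<in> null_sets M" using A by (simp add: M.emeasure_eq_measure null_sets_def)
  qed
qed

end



lemma Df_small:
  assumes e: "0 < e"
  shows "\<exists>d>0. \<forall>p' (q'::real). 0 \<le> p' \<longrightarrow> p' \<le> d \<longrightarrow> 0 \<le> q' \<longrightarrow> q' \<le> 1
     \<longrightarrow> (q' = 0 \<longrightarrow> p' = 0) \<longrightarrow> - e \<le> Df p' q'"
proof (intro exI[of _ "(e/2)^2"] conjI allI impI)
  show "0 < (e/2)^2" using e by simp
  fix p' q' :: real assume h: "0 \<le> p'" "p' \<le> (e/2)^2" "0 \<le> q'" "q' \<le> 1" "q' = 0 \<longrightarrow> p' = 0"
  show "- e \<le> Df p' q'"
  proof (cases "p' = 0")
    case True then show ?thesis using e by (simp add: Df_def)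
  next
    case False
    then have p': "0 < p'" using h by simp
    then have q': "0 < q'" using h by (cases "q' = 0") auto
    have "Df p' 1 \<le> Df p' q'" using Df_mono[OF p' q' h(4)] .
    moreover have "Df p' 1 = p' * ln p'" using p' by (simp add: Df_def ln_div)
    moreover have "sqrt p' \<le> e / 2"
      using h(2) e by (metis h(1) real_sqrt_le_mono real_sqrt_abs abs_of_nonneg half_gt_zero less_imp_le power2_eq_square real_sqrt_abs2)
    ultimately show ?thesis using xlnx_lower[OF p'] by linarith
  qed
qed

locale two = A: act M a + B: act M b for M :: "'x measure" and a b :: "'g::group_add \<Rightarrow> 'x \<Rightarrow> 'x"
begin

lemma transfer:
  assumes wc: "weakly_contained M a b" and cp: "cpart M As" and e: "0 < e"
  shows "\<exists>Bs. cpart M Bs \<and> (\<Sum>i<length As. Df (measure M (As!i)) (measure M (a g ` (As!i)))) - e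
            \<le> (\<Sum>i<length Bs. Df (measure M (Bs!i)) (measure M (b g ` (Bs!i))))"
proof -
  define n where "n = length As"
  define P where "P i = measure M (As!i)" for i
  define Q where "Q i = measure M (a g ` (As!i))" for i
  define e' where "e' = e / (real n + 1)"
  have e': "0 < e'" using e by (simp add: e'_def)
  have dp: "dpart M As" using cp by (simp add: cpart_def)
  have As_sets: "i < n \<Longrightarrow> As!i \<in> sets M" for i using dpart_sets[OF dp] by (simp add: n_def)
  have As_disj: "i < n \<Longrightarrow> j < n \<Longrightarrow> i \<noteq> j \<Longrightarrow> As!i \<inter> As!j = {}" for i j
    using dp by (simp add: dpart_def n_def)
  have As_cov: "(\<Union>i\<in>{..<n}. As!i) = UNIV" using cp A.sp by (simp add: cpart_def union_idx n_def)
  have PQ: "i < n \<Longrightarrow> 0 < P i \<Longrightarrow> 0 < Q i" for i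
    using A.img_null[OF As_sets, of i g] measure_nonneg[of M "a g ` (As!i)"] by (auto simp: P_def Q_def less_le)
  have "\<forall>i\<in>{..<n}. \<exists>d>0. \<forall>p' q'. \<bar>p' - P i\<bar> \<le> d \<longrightarrow> 0 \<le> p' \<longrightarrow> 0 \<le> q' \<longrightarrow> q' \<le> 1 \<longrightarrow> q' \<le> Q i + d
     \<longrightarrow> (q' = 0 \<longrightarrow> p' = 0) \<longrightarrow> Df (P i) (Q i) - e' \<le> Df p' q'"
    using PQ e' by (intro ballI Df_lower) (auto simp: P_def Q_def)
  then obtain D where D: "\<And>i. i \<in> {..<n} \<Longrightarrow> D i > 0 \<and> (\<forall>p' q'. \<bar>p' - P i\<bar> \<le> D i \<longrightarrow> 0 \<le> p' \<longrightarrow> 0 \<le> q' \<longrightarrow> q' \<le> 1 \<longrightarrow> q' \<le> Q i + D i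
     \<longrightarrow> (q' = 0 \<longrightarrow> p' = 0) \<longrightarrow> Df (P i) (Q i) - e' \<le> Df p' q')"
    by metis
  obtain dR where dR: "dR > 0" "\<And>p' q'. 0 \<le> p' \<Longrightarrow> p' \<le> dR \<Longrightarrow> 0 \<le> q' \<Longrightarrow> q' \<le> 1
     \<Longrightarrow> (q' = 0 \<longrightarrow> p' = 0) \<Longrightarrow> - e' \<le> Df p' q'"
    using Df_small[OF e'] by metis
  define d where "d = Min (insert dR (D ` {..<n}))"
  have d: "0 < d" using dR D by (simp add: d_def)
  have d_le: "d \<le> dR" "\<And>i. i < n \<Longrightarrow> d \<le> D i" by (auto simp: d_def)
  define \<eta> where "\<eta> = d / (real n + real n ^ 2 + 1)"
  have den: "0 < real n + real n ^ 2 + 1" by (simp add: add_nonneg_pos)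
  then have \<eta>: "0 < \<eta>" using d unfolding \<eta>_def by (intro divide_pos_pos)
  have \<eta>1: "real n * \<eta> + real n ^ 2 * \<eta> \<le> d"
  proof -
    have "(real n + real n ^ 2) * \<eta> \<le> (real n + real n ^ 2 + 1) * \<eta>" using \<eta> by (intro mult_right_mono) auto
    also have "\<dots> = d" using den by (simp add: \<eta>_def)
    finally show ?thesis by (simp add: algebra_simps)
  qed
  have \<eta>2: "real n * \<eta> \<le> d" using \<eta>1 \<eta> by (smt (verit) zero_le_power2 mult_nonneg_nonneg)
  have \<eta>3: "real n ^ 2 * \<eta> \<le> d" using \<eta>1 \<eta> by (smt (verit) of_nat_0_le_iff mult_nonneg_nonneg)
  obtain Bs where lenB: "length Bs = n" and Bs_sets: "set Bs \<subseteq> sets M"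
    and est: "\<And>h i j. h \<in> {0, g} \<Longrightarrow> i < n \<Longrightarrow> j < n \<Longrightarrow>
       \<bar>measure M (a h ` (As ! i) \<inter> As ! j) - measure M (b h ` (Bs ! i) \<inter> Bs ! j)\<bar> < \<eta>"
  proof -
    note H = wc[unfolded weakly_contained_def, rule_format, OF \<eta>, of "{0, g}" As]
    have "set As \<subseteq> sets M" using dp by (simp add: dpart_def)
    then obtain Bs where "length Bs = length As" "set Bs \<subseteq> sets M"
      "\<forall>h\<in>{0,g}. \<forall>i<length As. \<forall>j<length As.
        \<bar>measure M (a h ` (As ! i) \<inter> As ! j) - measure M (b h ` (Bs ! i) \<inter> Bs ! j)\<bar> < \<eta>"
      using H by blast
    then show ?thesis using that unfolding n_def by blast
  qed
  define B where "B i = Bs!i" for i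
  have B_sets: "B i \<in> sets M" if "i < n" for i using Bs_sets that lenB by (auto simp: B_def)
  define B' where "B' i = B i - (\<Union>j\<in>{..<i}. B j)" for i
  define R where "R = UNIV - (\<Union>j\<in>{..<n}. B j)"
  have B'_sets: "B' i \<in> sets M" if "i < n" for i using B_sets that unfolding B'_def by auto
  have R_sets: "R \<in> sets M" unfolding R_def using B_sets A.sp by (metis sets.compl_sets sets.finite_UN finite_lessThan lessThan_iff Diff_UNIV Compl_eq_Diff_UNIV)
  have E1: "\<bar>measure M (As ! i \<inter> As ! j) - measure M (B i \<inter> B j)\<bar> < \<eta>" if "i < n" "j < n" for i j
    using est[of 0 i j] that A.a_zero B.a_zero by (simp add: B_def)
  have E2: "\<bar>measure M (a g ` (As ! i) \<inter> As ! j) - measure M (b g ` (B i) \<inter> B j)\<bar> < \<eta>" if "i < n" "j < n" for i j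
    using est[of g i j] that by (simp add: B_def)
  define Cs where "Cs = map B' [0..<n] @ [R]"
  have lenC: "length Cs = Suc n" by (simp add: Cs_def)
  have nthC: "i < n \<Longrightarrow> Cs ! i = B' i" for i by (simp add: Cs_def nth_append)
  have nthR: "Cs ! n = R" by (simp add: Cs_def nth_append)
  have B'_sub: "B' i \<subseteq> B i" for i by (auto simp: B'_def)
  have B'_disj: "B' i \<inter> B' j = {}" if "i \<noteq> j" for i j
  proof (cases "i < j")
    case True then show ?thesis by (auto simp: B'_def)
  next
    case False then have "j < i" using that by simp
    then show ?thesis by (auto simp: B'_def)
  qed
  have UB': "(\<Union>i\<in>{..<n}. B' i) = (\<Union>i\<in>{..<n}. B i)"
  proof (intro set_eqI iffI)
    fix x assume "x \<in> (\<Union>i\<in>{..<n}. B i)"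
    then obtain i where i: "i < n" "x \<in> B i" by auto
    define k where "k = (LEAST k. x \<in> B k)"
    have k: "x \<in> B k" "k \<le> i" using i LeastI[of "\<lambda>k. x \<in> B k" i] Least_le[of "\<lambda>k. x \<in> B k" i] by (auto simp: k_def)
    have "x \<notin> B j" if "j < k" for j using not_less_Least[of j "\<lambda>k. x \<in> B k"] that by (auto simp: k_def)
    then have "x \<in> B' k" using k by (auto simp: B'_def)
    then show "x \<in> (\<Union>i\<in>{..<n}. B' i)" using k i by auto
  qed (use B'_sub in auto)
  have cpC: "cpart M Cs"
    unfolding cpart_def dpart_def
  proof (intro conjI allI impI)
    show "set Cs \<subseteq> sets M" using B'_sets R_sets by (auto simp: Cs_def)
    fix i j assume ij: "i < length Cs" "j < length Cs" "i \<noteq> j"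
    show "Cs!i \<inter> Cs!j = {}"
    proof (cases "i < n")
      case True
      show ?thesis
      proof (cases "j < n")
        case True
        then show ?thesis using \<open>i < n\<close> ij B'_disj by (simp add: nthC)
      next
        case False
        then have "j = n" using ij lenC by auto
        then show ?thesis using \<open>i < n\<close> B'_sub[of i] by (auto simp: nthC nthR R_def)
      qed
    next
      case False
      then have "i = n" using ij lenC by auto
      then have "j < n" using ij lenC by auto
      then show ?thesis using \<open>i = n\<close> B'_sub[of j] by (auto simp: nthC nthR R_def)
    qed
  next
    have "\<Union>(set Cs) = (\<Union>i\<in>{..<n}. B' i) \<union> R" by (auto simp: Cs_def)
    then show "\<Union>(set Cs) = space M" using UB' A.sp by (auto simp: R_def)
  qed
  have sumP: "(\<Sum>i<n. P i) = 1"
    using sum_meas_cpart[OF cp A.M.prob_space_axioms refl] by (simp add: P_def n_def)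
  have sumC: "(\<Sum>i<n. measure M (B' i)) + measure M R = 1"
    using sum_meas_cpart[OF cpC A.M.prob_space_axioms refl] by (simp add: lenC nthC nthR)
  have Bdiag: "\<bar>P i - measure M (B i)\<bar> < \<eta>" if "i < n" for i using E1[OF that that] by (simp add: P_def)
  have Boff: "measure M (B i \<inter> B j) < \<eta>" if "i < n" "j < n" "i \<noteq> j" for i j
    using E1[OF that(1,2)] As_disj[OF that] by simp
  have pl: "P i - real n * \<eta> \<le> measure M (B' i)" if i: "i < n" for i
  proof -
    have "B i \<subseteq> B' i \<union> (\<Union>j\<in>{..<i}. B i \<inter> B j)" by (auto simp: B'_def)
    then have "measure M (B i) \<le> measure M (B' i \<union> (\<Union>j\<in>{..<i}. B i \<inter> B j))"
      using B_sets B'_sets i by (intro A.M.finite_measure_mono) auto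
    also have "\<dots> \<le> measure M (B' i) + measure M (\<Union>j\<in>{..<i}. B i \<inter> B j)"
      using B_sets B'_sets i by (intro measure_subadditive) (auto simp: A.M.emeasure_eq_measure)
    also have "measure M (\<Union>j\<in>{..<i}. B i \<inter> B j) \<le> (\<Sum>j<i. measure M (B i \<inter> B j))"
      using B_sets i by (intro A.M.finite_measure_subadditive_finite) auto
    also have "\<dots> \<le> (\<Sum>j<i. \<eta>)" using Boff i by (intro sum_mono less_imp_le) auto
    also have "\<dots> = real i * \<eta>" by simp
    finally have "measure M (B i) \<le> measure M (B' i) + real i * \<eta>" by simp
    moreover have "real i * \<eta> + \<eta> \<le> real n * \<eta>"
      using i \<eta> by (metis distrib_right mult_1 mult_right_mono of_nat_1 of_nat_add of_nat_le_iff
          Suc_leI Suc_eq_plus1 less_imp_le)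
    ultimately show ?thesis using Bdiag[OF i] by linarith
  qed
  have pu: "measure M (B' i) \<le> P i + real n * \<eta>" if i: "i < n" for i
  proof -
    have "measure M (B' i) \<le> measure M (B i)" using B_sets B'_sub i by (intro A.M.finite_measure_mono) auto
    moreover have "\<eta> \<le> real n * \<eta>" using i \<eta> by simp
    ultimately show ?thesis using Bdiag[OF i] by linarith
  qed
  have Rle: "measure M R \<le> real n ^ 2 * \<eta>"
  proof -
    have "(\<Sum>i<n. P i - real n * \<eta>) \<le> (\<Sum>i<n. measure M (B' i))" using pl by (intro sum_mono) auto
    then have "1 - real n * (real n * \<eta>) \<le> (\<Sum>i<n. measure M (B' i))"
      by (simp add: sum_subtractf sumP)
    then show ?thesis using sumC by (simp add: power2_eq_square algebra_simps)
  qed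
  have Qsum: "Q i = (\<Sum>j<n. measure M (a g ` (As ! i) \<inter> As ! j))" if i: "i < n" for i
  proof -
    have "a g ` (As!i) = (\<Union>j\<in>{..<n}. a g ` (As ! i) \<inter> As ! j)" using As_cov by auto
    then have "Q i = measure M (\<Union>j\<in>{..<n}. a g ` (As ! i) \<inter> As ! j)" by (simp add: Q_def)
    also have "\<dots> = (\<Sum>j<n. measure M (a g ` (As ! i) \<inter> As ! j))"
    proof (intro A.M.finite_measure_finite_Union)
      show "disjoint_family_on (\<lambda>j. a g ` (As!i) \<inter> As!j) {..<n}"
        unfolding disjoint_family_on_def using As_disj by blast
    qed (use As_sets A.img_sets[OF As_sets[OF i]] in auto)
    finally show ?thesis .
  qed
  have qu: "measure M (b g ` B' i) \<le> Q i + real n * \<eta> + real n ^ 2 * \<eta>" if i: "i < n" for i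
  proof -
    have "measure M (b g ` B' i) \<le> measure M (b g ` B i)"
      using B.img_sets[OF B_sets[OF i]] B'_sub by (intro A.M.finite_measure_mono image_mono) auto
    also have "b g ` B i \<subseteq> (\<Union>j\<in>{..<n}. b g ` B i \<inter> B j) \<union> R" by (auto simp: R_def)
    then have "measure M (b g ` B i) \<le> measure M ((\<Union>j\<in>{..<n}. b g ` B i \<inter> B j) \<union> R)"
      using B.img_sets[OF B_sets[OF i]] B_sets R_sets by (intro A.M.finite_measure_mono) auto
    also have "\<dots> \<le> measure M (\<Union>j\<in>{..<n}. b g ` B i \<inter> B j) + measure M R"
      using B.img_sets[OF B_sets[OF i]] B_sets R_sets by (intro measure_subadditive) (auto simp: A.M.emeasure_eq_measure)
    also have "measure M (\<Union>j\<in>{..<n}. b g ` B i \<inter> B j) \<le> (\<Sum>j<n. measure M (b g ` B i \<inter> B j))"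
      using B.img_sets[OF B_sets[OF i]] B_sets by (intro A.M.finite_measure_subadditive_finite) auto
    also have "\<dots> \<le> (\<Sum>j<n. measure M (a g ` (As ! i) \<inter> As ! j) + \<eta>)"
    proof (intro sum_mono)
      fix j assume "j \<in> {..<n}"
      then show "measure M (b g ` B i \<inter> B j) \<le> measure M (a g ` (As ! i) \<inter> As ! j) + \<eta>"
        using E2[OF i, of j] by (simp add: abs_less_iff)
    qed
    also have "\<dots> = Q i + real n * \<eta>" by (simp add: sum.distrib Qsum[OF i])
    finally show ?thesis using Rle by linarith
  qed
  have termi: "Df (P i) (Q i) - e' \<le> Df (measure M (B' i)) (measure M (b g ` B' i))" if i: "i < n" for i
  proof -
    have Di: "D i > 0" and H: "\<And>p' q'. \<bar>p' - P i\<bar> \<le> D i \<Longrightarrow> 0 \<le> p' \<Longrightarrow> 0 \<le> q' \<Longrightarrow> q' \<le> 1 \<Longrightarrow> q' \<le> Q i + D i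
      \<Longrightarrow> (q' = 0 \<longrightarrow> p' = 0) \<Longrightarrow> Df (P i) (Q i) - e' \<le> Df p' q'" using D[of i] i by auto
    show ?thesis
    proof (rule H)
      show "\<bar>measure M (B' i) - P i\<bar> \<le> D i" using pl[OF i] pu[OF i] \<eta>2 d_le(2)[OF i] by (simp add: abs_le_iff)
      show "measure M (b g ` B' i) \<le> Q i + D i" using qu[OF i] \<eta>1 d_le(2)[OF i] by linarith
      show "measure M (b g ` B' i) \<le> 1" by (rule A.M.prob_le_1)
      show "measure M (b g ` B' i) = 0 \<longrightarrow> measure M (B' i) = 0" using B.img_null[OF B'_sets[OF i]] by auto
    qed auto
  qed
  have termR: "- e' \<le> Df (measure M R) (measure M (b g ` R))"
    using dR(2)[of "measure M R" "measure M (b g ` R)"] Rle \<eta>3 d_le(1) B.img_null[OF R_sets] A.M.prob_le_1 by auto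
  have ne: "(real n + 1) * e' = e" unfolding e'_def by (simp add: add_nonneg_pos)
  have "(\<Sum>i<length As. Df (measure M (As!i)) (measure M (a g ` (As!i)))) - e
      = (\<Sum>i<n. Df (P i) (Q i) - e') - e'"
    unfolding ne[symmetric] by (simp add: P_def Q_def n_def sum_subtractf algebra_simps)
  also have "\<dots> \<le> (\<Sum>i<n. Df (measure M (B' i)) (measure M (b g ` B' i))) + Df (measure M R) (measure M (b g ` R))"
  proof -
    have "(\<Sum>i<n. Df (P i) (Q i) - e') \<le> (\<Sum>i<n. Df (measure M (B' i)) (measure M (b g ` B' i)))"
      using termi by (intro sum_mono) auto
    then show ?thesis using termR by linarith
  qed
  also have "\<dots> = (\<Sum>i<length Cs. Df (measure M (Cs!i)) (measure M (b g ` (Cs!i))))"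
    by (simp add: lenC nthC nthR)
  finally show ?thesis using cpC by blast
qed

end


lemma ennreal_identity:
  assumes y: "0 < (y::real)"
  shows "ennreal (phi y) + 1 + ennreal (ln y) = ennreal y + ennreal (- ln y)"
proof (cases "0 \<le> ln y")
  case True
  have "ennreal (phi y) + 1 + ennreal (ln y) = ennreal (phi y + 1 + ln y)"
    using phi_nonneg[OF y] True by simp
  also have "phi y + 1 + ln y = y" by (simp add: phi_def)
  finally show ?thesis using True by (simp add: ennreal_neg)
next
  case False
  have "ennreal (phi y) + 1 + ennreal (ln y) = ennreal (phi y + 1)"
    using phi_nonneg[OF y] False by (simp add: ennreal_neg)
  also have "phi y + 1 = y + (- ln y)" by (simp add: phi_def)
  also have "ennreal \<dots> = ennreal y + ennreal (- ln y)" using False y by (intro ennreal_plus) auto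
  finally show ?thesis .
qed

lemma K_le:
  fixes a b :: "'g::group_add \<Rightarrow> 'x \<Rightarrow> 'x"
  assumes tw: "two M a b" and wc: "weakly_contained M a b"
  shows "kl.K M (act_measure M a g) \<le> kl.K M (act_measure M b g)"
proof -
  interpret two M a b by (rule tw)
  interpret Ka: kl M "act_measure M a g" by (rule A.kl)
  interpret Kb: kl M "act_measure M b g" by (rule B.kl)
  show ?thesis
  proof (rule dense_le)
    fix y assume y: "y < Ka.K"
    have "y \<noteq> \<top>" using y top_greatest[of "Ka.K"] leD by blast
    then obtain c where c: "y = ennreal c" "0 \<le> c" by (cases y) auto
    obtain As where cp: "cpart M As" and cS: "c < (\<Sum>i<length As. Df (measure M (As!i)) (measure (act_measure M a g) (As!i)))"
      using Ka.approx[OF _ c(2)] y c(1) by blast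
    have As_sets: "i < length As \<Longrightarrow> As!i \<in> sets M" for i using cp by (auto simp: cpart_def dpart_def)
    define S where "S = (\<Sum>i<length As. Df (measure M (As!i)) (measure M (a g ` (As!i))))"
    have eqS: "(\<Sum>i<length As. Df (measure M (As!i)) (measure (act_measure M a g) (As!i))) = S"
      unfolding S_def by (intro sum.cong refl) (simp add: A.act_measure_eq As_sets)
    have "c < S" using cS unfolding eqS .
    then obtain Bs where cpB: "cpart M Bs"
      and SB: "S - (S - c) \<le> (\<Sum>i<length Bs. Df (measure M (Bs!i)) (measure M (b g ` (Bs!i))))"
      using transfer[OF wc cp, of "S - c" g] \<open>c < S\<close> unfolding S_def by auto
    have Bs_sets: "i < length Bs \<Longrightarrow> Bs!i \<in> sets M" for i using cpB by (auto simp: cpart_def dpart_def)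
    have eqB: "(\<Sum>i<length Bs. Df (measure M (Bs!i)) (measure (act_measure M b g) (Bs!i)))
       = (\<Sum>i<length Bs. Df (measure M (Bs!i)) (measure M (b g ` (Bs!i))))"
      by (intro sum.cong refl) (simp add: B.act_measure_eq Bs_sets)
    have "c \<le> (\<Sum>i<length Bs. Df (measure M (Bs!i)) (measure (act_measure M b g) (Bs!i)))"
      unfolding eqB using SB by simp
    then have "ennreal c \<le> ennreal (\<Sum>i<length Bs. Df (measure M (Bs!i)) (measure (act_measure M b g) (Bs!i)))"
      by (rule ennreal_leI)
    also have "\<dots> \<le> Kb.K" by (rule Kb.sum_D_le[OF cpB])
    finally show "y \<le> Kb.K" using c by simp
  qed
qed



lemma entropy_eq:
  fixes a :: "'g::{group_add,countable} \<Rightarrow> 'x \<Rightarrow> 'x"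
  assumes "act M a"
  shows "furstenberg_entropy m M a = enn2ereal (\<integral>\<^sup>+g. kl.K M (act_measure M a g) \<partial>measure_pmf m)"
proof -
  interpret act M a by fact
  define F where "F g x = enn2real (RN_deriv M (act_measure M a g) x)" for g x
  define Pg where "Pg g = (\<integral>\<^sup>+ x. ennreal (ln (F g x)) \<partial>M)" for g
  define Ng where "Ng g = (\<integral>\<^sup>+ x. ennreal (- ln (F g x)) \<partial>M)" for g
  define Kg where "Kg g = kl.K M (act_measure M a g)" for g
  have per: "Kg g + 1 + Pg g = 1 + Ng g \<and> Pg g \<le> 1" for g
  proof -
    interpret Ka: kl M "act_measure M a g" by (rule kl)
    have Ff: "F g = Ka.f" by (simp add: F_def Ka.f_def fun_eq_iff)
    have int1: "(\<integral>\<^sup>+ x. ennreal (Ka.f x) \<partial>M) = 1"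
    proof -
      have "(\<integral>\<^sup>+ x. ennreal (Ka.f x) \<partial>M) = ennreal (\<integral>x. Ka.f x \<partial>M)"
        using Ka.f_int Ka.f_nonneg by (intro nn_integral_eq_integral) auto
      also have "(\<integral>x. Ka.f x \<partial>M) = (\<integral>x. Ka.f x * indicator (space M) x \<partial>M)"
        by (intro Bochner_Integration.integral_cong) auto
      also have "\<dots> = measure (act_measure M a g) (space M)"
        using Ka.qA[of "space M"] by simp
      also have "\<dots> = 1" using prob_space.prob_space[OF act_prob[of g]] by (simp add: act_measure_def)
      finally show ?thesis by simp
    qed
    have "Kg g + 1 + Pg g = (\<integral>\<^sup>+ x. ennreal (phi (Ka.f x)) + 1 + ennreal (ln (Ka.f x)) \<partial>M)"
      unfolding Kg_def Ka.K_def Pg_def Ff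
      by (subst nn_integral_add; simp add: phi_def)+ (simp add: M.emeasure_space_1)
    also have "\<dots> = (\<integral>\<^sup>+ x. ennreal (Ka.f x) + ennreal (- ln (Ka.f x)) \<partial>M)"
    proof (intro nn_integral_cong_AE)
      show "AE x in M. ennreal (phi (Ka.f x)) + 1 + ennreal (ln (Ka.f x)) = ennreal (Ka.f x) + ennreal (- ln (Ka.f x))"
        using Ka.f_pos
        by eventually_elim (rule ennreal_identity)
    qed
    also have "\<dots> = 1 + Ng g"
      unfolding Ng_def Ff by (subst nn_integral_add) (auto simp: int1)
    finally have e1: "Kg g + 1 + Pg g = 1 + Ng g" .
    have "Pg g \<le> (\<integral>\<^sup>+ x. ennreal (Ka.f x) \<partial>M)"
      unfolding Pg_def Ff
    proof (intro nn_integral_mono ennreal_leI)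
      fix x show "ln (Ka.f x) \<le> Ka.f x"
      proof (cases "Ka.f x > 0")
        case True then show ?thesis using ln_le_minus_one[of "Ka.f x"] by linarith
      next
        case False then have "Ka.f x = 0" using Ka.f_nonneg[of x] by linarith
        then show ?thesis by simp
      qed
    qed
    with int1 e1 show ?thesis by simp
  qed
  define H where "H = (\<integral>\<^sup>+g. Kg g \<partial>measure_pmf m)"
  define Pt where "Pt = (\<integral>\<^sup>+g. Pg g \<partial>measure_pmf m)"
  define Nt where "Nt = (\<integral>\<^sup>+g. Ng g \<partial>measure_pmf m)"
  have one: "(\<integral>\<^sup>+g. 1 \<partial>measure_pmf m) = 1" by (simp add: measure_pmf.emeasure_space_1)
  have a1: "(\<integral>\<^sup>+g. Kg g + 1 + Pg g \<partial>measure_pmf m) = (\<integral>\<^sup>+g. Kg g + 1 \<partial>measure_pmf m) + Pt"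
    unfolding Pt_def by (rule nn_integral_add) auto
  have a2: "(\<integral>\<^sup>+g. Kg g + 1 \<partial>measure_pmf m) = H + (\<integral>\<^sup>+g. 1 \<partial>measure_pmf m)"
    unfolding H_def by (rule nn_integral_add) auto
  have "H + 1 + Pt = (\<integral>\<^sup>+g. Kg g + 1 + Pg g \<partial>measure_pmf m)"
    using a1 a2 one by simp
  also have "\<dots> = (\<integral>\<^sup>+g. 1 + Ng g \<partial>measure_pmf m)" by (simp only: per[THEN conjunct1])
  also have "\<dots> = (\<integral>\<^sup>+g. 1 \<partial>measure_pmf m) + Nt" unfolding Nt_def by (rule nn_integral_add) auto
  also have "\<dots> = 1 + Nt" using one by simp
  finally have "1 + (H + Pt) = 1 + Nt" by (simp add: ac_simps)
  then have Nt: "Nt = H + Pt" by (simp add: ennreal_add_left_cancel)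
  have "Pt \<le> (\<integral>\<^sup>+g. 1 \<partial>measure_pmf m)" unfolding Pt_def using per by (intro nn_integral_mono) auto
  then have "Pt \<le> 1" by (simp add: measure_pmf.emeasure_space_1)
  then have "Pt \<noteq> \<top>"
  proof (intro notI)
    assume "Pt \<le> 1" "Pt = \<top>"
    then have "\<top> \<le> (1::ennreal)" by simp
    moreover have "(1::ennreal) < \<top>" by simp
    ultimately show False by (metis leD)
  qed
  then have "enn2ereal Pt \<noteq> \<infinity>" using enn2ereal_eq_top_iff[of Pt] by blast
  moreover have "0 \<le> enn2ereal Pt" by (rule enn2ereal_nonneg)
  ultimately obtain r where r: "enn2ereal Pt = ereal r" by (cases "enn2ereal Pt") auto
  have "furstenberg_entropy m M a = enn2ereal Nt - enn2ereal Pt"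
    unfolding furstenberg_entropy_def Let_def Nt_def Pt_def Ng_def Pg_def F_def by (rule refl)
  also have "\<dots> = enn2ereal H + ereal r - ereal r"
    unfolding Nt plus_ennreal.rep_eq r by (rule refl)
  also have "\<dots> = enn2ereal H" by (cases "enn2ereal H") simp_all
  finally show ?thesis unfolding H_def Kg_def .
qed


theorem theorem1:
  fixes m :: "'g::{group_add,countable} pmf"
    and M :: "'x::polish_space measure"
    and a b :: "'g \<Rightarrow> 'x \<Rightarrow> 'x"
  assumes "standard_prob_space M"
    and "stationary_action m M a"
    and "stationary_action m M b"
    and "weakly_equivalent M a b"
  shows "furstenberg_entropy m M a = furstenberg_entropy m M b"
proof -
  have sM: "sets M = sets (borel :: 'x measure)" and pM: "prob_space M"
    using assms(1) by (auto simp: standard_prob_space_def)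
  have sp: "space M = UNIV" using sets_eq_imp_space_eq[OF sM] by simp
  have nsa: "nonsingular_action M a" and nsb: "nonsingular_action M b"
    using assms(2,3) by (auto simp: stationary_action_def)
  have aa: "act M a" by (intro act.intro act_axioms.intro pM nsa sp)
  have ab: "act M b" by (intro act.intro act_axioms.intro pM nsb sp)
  have tab: "two M a b" using aa ab by (intro two.intro)
  have tba: "two M b a" using aa ab by (intro two.intro)
  have wab: "weakly_contained M a b" and wba: "weakly_contained M b a"
    using assms(4) by (auto simp: weakly_equivalent_def)
  have eq: "kl.K M (act_measure M a g) = kl.K M (act_measure M b g)" for g
    using K_le[OF tab wab, of g] K_le[OF tba wba, of g] by (rule antisym)
  show ?thesis unfolding entropy_eq[OF aa] entropy_eq[OF ab] eq ..
qed


end
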